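(* For any LSBM $X_t=\tilde W_{T_t}$ (Brownian motion with drift $\beta$ time changed by an independent Lévy subordinator $T$) and any $x_0>0$, the sequence of stopping times $(t_i^*(x_0))_{i\ge1}$ converges almost surely to the first passage time $t^*=\inf\{t\ge0: X_t\le0\}$.
   Context: Setup (LSBM): $W$ standard Brownian motion, $\beta\in\mathbb{R}$, $\tilde W_S=x_0+W_S+\beta S$; $T$ a subordinator (nondecreasing Lévy process with drift $b\ge0$ and Lévy measure on $(0,\infty)$) independent of $W$; $X_t=\tilde W_{T_t}$. For $x\in\mathbb{R}$, $T^*(x)=\inf\{S\ge0:x+W_S+\beta S\le0\}$. $t_1^*(x_0)=\inf\{t\ge0:T_t\ge T^*(x_0)\}$. For $i\ge2$: if $t_{i-1}^*=\infty$ or $X_{t_{i-1}^*}\le0$ set $t_i^*=t_{i-1}^*$; otherwise $t_i^*=\inf\{t\ge t_{i-1}^*:T_t-T_{t_{i-1}^*}\ge\sigma_{i-1}\}$ with $\sigma_{i-1}=\inf\{S\ge0:\tilde W_{T_{t_{i-1}^*}+S}\le0\}$. All infima of empty sets are $+\infty$. *)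

theory Defs
  imports "HOL-Probability.Probability"
begin

definition std_brownian_motion :: "'a measure \<Rightarrow> (real \<Rightarrow> 'a \<Rightarrow> real) \<Rightarrow> bool" where
  "std_brownian_motion M W \<longleftrightarrow>
     prob_space M \<and>
     (\<forall>t\<ge>0. W t \<in> borel_measurable M) \<and>
     (\<forall>\<omega>\<in>space M. W 0 \<omega> = 0 \<and> continuous_on {0..} (\<lambda>t. W t \<omega>)) \<and>
     (\<forall>s t. 0 \<le> s \<longrightarrow> s < t \<longrightarrow>
        distributed M lborel (\<lambda>\<omega>. W t \<omega> - W s \<omega>) (\<lambda>x. ennreal (normal_density 0 (sqrt (t - s)) x))) \<and>
     (\<forall>(n::nat) (ts::nat \<Rightarrow> real). 0 \<le> ts 0 \<and> (\<forall>i<n. ts i \<le> ts (Suc i)) \<longrightarrow>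
        prob_space.indep_vars M (\<lambda>_. borel) (\<lambda>i \<omega>. W (ts (Suc i)) \<omega> - W (ts i) \<omega>) {..<n})"

definition subordinator :: "'a measure \<Rightarrow> (real \<Rightarrow> 'a \<Rightarrow> real) \<Rightarrow> bool" where
  "subordinator M T \<longleftrightarrow>
     prob_space M \<and>
     (\<forall>t\<ge>0. T t \<in> borel_measurable M) \<and>
     (\<forall>\<omega>\<in>space M. T 0 \<omega> = 0 \<and> mono_on {0..} (\<lambda>t. T t \<omega>) \<and>
        (\<forall>t\<ge>0. continuous (at_right t) (\<lambda>s. T s \<omega>))) \<and>
     (\<forall>s t. 0 \<le> s \<longrightarrow> s \<le> t \<longrightarrow>
        distr M borel (\<lambda>\<omega>. T t \<omega> - T s \<omega>) = distr M borel (T (t - s))) \<and>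
     (\<forall>(n::nat) (ts::nat \<Rightarrow> real). 0 \<le> ts 0 \<and> (\<forall>i<n. ts i \<le> ts (Suc i)) \<longrightarrow>
        prob_space.indep_vars M (\<lambda>_. borel) (\<lambda>i \<omega>. T (ts (Suc i)) \<omega> - T (ts i) \<omega>) {..<n})"

definition indep_processes :: "'a measure \<Rightarrow> (real \<Rightarrow> 'a \<Rightarrow> real) \<Rightarrow> (real \<Rightarrow> 'a \<Rightarrow> real) \<Rightarrow> bool" where
  "indep_processes M W T \<longleftrightarrow>
     prob_space.indep_var M
       (Pi\<^sub>M {0..} (\<lambda>_. borel)) (\<lambda>\<omega>. \<lambda>t\<in>{0..}. W t \<omega>)
       (Pi\<^sub>M {0..} (\<lambda>_. borel)) (\<lambda>\<omega>. \<lambda>t\<in>{0..}. T t \<omega>)"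

definition drifted_BM :: "(real \<Rightarrow> 'a \<Rightarrow> real) \<Rightarrow> real \<Rightarrow> real \<Rightarrow> 'a \<Rightarrow> real \<Rightarrow> real" where
  "drifted_BM W \<beta> x0 \<omega> S = x0 + W S \<omega> + \<beta> * S"

definition lsbm :: "(real \<Rightarrow> 'a \<Rightarrow> real) \<Rightarrow> (real \<Rightarrow> 'a \<Rightarrow> real) \<Rightarrow> real \<Rightarrow> real \<Rightarrow> 'a \<Rightarrow> real \<Rightarrow> real" where
  "lsbm W T \<beta> x0 \<omega> t = drifted_BM W \<beta> x0 \<omega> (T t \<omega>)"

definition Tstar :: "(real \<Rightarrow> 'a \<Rightarrow> real) \<Rightarrow> real \<Rightarrow> real \<Rightarrow> 'a \<Rightarrow> ereal" where
  "Tstar W \<beta> x \<omega> = Inf (ereal ` {S. 0 \<le> S \<and> x + W S \<omega> + \<beta> * S \<le> 0})"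

definition tstar_step :: "(real \<Rightarrow> 'a \<Rightarrow> real) \<Rightarrow> (real \<Rightarrow> 'a \<Rightarrow> real) \<Rightarrow> real \<Rightarrow> real \<Rightarrow> 'a \<Rightarrow> ereal \<Rightarrow> ereal" where
  "tstar_step W T \<beta> x0 \<omega> p =
     (if p = \<infinity> \<or> lsbm W T \<beta> x0 \<omega> (real_of_ereal p) \<le> 0 then p
      else (let q = real_of_ereal p;
                \<sigma> = Inf (ereal ` {S. 0 \<le> S \<and> drifted_BM W \<beta> x0 \<omega> (T q \<omega> + S) \<le> 0})
            in Inf (ereal ` {t. q \<le> t \<and> \<sigma> \<le> ereal (T t \<omega> - T q \<omega>)})))"

text \<open>tstar_seq W T beta x0 omega n is t_{n+1}^*(x0) (so index 0 is t_1^*).\<close>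
primrec tstar_seq :: "(real \<Rightarrow> 'a \<Rightarrow> real) \<Rightarrow> (real \<Rightarrow> 'a \<Rightarrow> real) \<Rightarrow> real \<Rightarrow> real \<Rightarrow> 'a \<Rightarrow> nat \<Rightarrow> ereal" where
  "tstar_seq W T \<beta> x0 \<omega> 0 =
     Inf (ereal ` {t. 0 \<le> t \<and> Tstar W \<beta> x0 \<omega> \<le> ereal (T t \<omega>)})"
| "tstar_seq W T \<beta> x0 \<omega> (Suc n) = tstar_step W T \<beta> x0 \<omega> (tstar_seq W T \<beta> x0 \<omega> n)"

definition first_passage :: "(real \<Rightarrow> 'a \<Rightarrow> real) \<Rightarrow> (real \<Rightarrow> 'a \<Rightarrow> real) \<Rightarrow> real \<Rightarrow> real \<Rightarrow> 'a \<Rightarrow> ereal" where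
  "first_passage W T \<beta> x0 \<omega> = Inf (ereal ` {t. 0 \<le> t \<and> lsbm W T \<beta> x0 \<omega> t \<le> 0})"

end

theory Submission
  imports Defs
begin


definition Yr :: "real \<Rightarrow> (real \<Rightarrow> real) \<Rightarrow> real" where
  "Yr r \<tau> = Sup (insert 0 {\<tau> (real_of_rat q) | q. 0 \<le> q \<and> \<tau> (real_of_rat q) \<le> r})"

lemma time_inf:
  fixes g :: "real \<Rightarrow> real" and e :: ereal
  assumes mono: "mono_on {q..} g" and rc: "\<forall>t\<ge>q. continuous (at_right t) g"
    and ne: "{t. q \<le> t \<and> e \<le> ereal (g t)} \<noteq> {}"
  shows "\<exists>u. Inf (ereal ` {t. q \<le> t \<and> e \<le> ereal (g t)}) = ereal u \<and> q \<le> u \<and> e \<le> ereal (g u)"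
proof -
  define B where "B = {t. q \<le> t \<and> e \<le> ereal (g t)}"
  have bdd: "bdd_below B" unfolding B_def by (rule bdd_belowI[of _ q]) auto
  have neB: "B \<noteq> {}" using ne B_def by simp
  define u where "u = Inf B"
  have e1: "Inf (ereal ` B) = ereal u" unfolding u_def using ereal_Inf'[OF bdd neB] by simp
  have qu: "q \<le> u" unfolding u_def using neB by (intro cInf_greatest) (auto simp: B_def)
  have "e \<le> ereal (g u)"
  proof (cases e)
    case (real c)
    have ev: "eventually (\<lambda>t. c \<le> g t) (at_right u)"
    proof -
      have "c \<le> g t" if "u < t" for t
      proof -
        obtain b where b: "b \<in> B" "b < t" using cInf_less_iff[OF neB bdd] \<open>u < t\<close> u_def by auto
        have "g b \<le> g t" using mono b that qu unfolding B_def
          by (intro mono_onD[OF mono]) auto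
        moreover have "c \<le> g b" using b real unfolding B_def by auto
        ultimately show ?thesis by simp
      qed
      then show ?thesis by (simp add: eventually_at_right_less eventually_mono[OF eventually_at_right_less])
    qed
    have "(g \<longlongrightarrow> g u) (at_right u)" using rc qu by (simp add: continuous_within)
    then have "c \<le> g u" by (rule tendsto_lowerbound[OF _ ev]) simp
    then show ?thesis using real by simp
  next
    case PInf then show ?thesis using neB by (auto simp: B_def)
  next
    case MInf then show ?thesis by simp
  qed
  then show ?thesis using e1 qu B_def by blast
qed

lemma space_inf:
  fixes f :: "real \<Rightarrow> real"
  assumes cont: "continuous_on {0..} f" and a: "0 \<le> a"
    and ne: "{S. 0 \<le> S \<and> f (a + S) \<le> 0} \<noteq> {}"
  shows "\<exists>s. Inf (ereal ` {S. 0 \<le> S \<and> f (a + S) \<le> 0}) = ereal s \<and> 0 \<le> s \<and> f (a + s) \<le> 0"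
proof -
  define A where "A = {S. 0 \<le> S \<and> f (a + S) \<le> 0}"
  have A': "A = {S \<in> {0..}. f (a + S) \<le> (\<lambda>_. 0) S}" unfolding A_def by auto
  have c2: "continuous_on {0..} (\<lambda>S. f (a + S))"
    by (rule continuous_on_compose2[OF cont]) (auto intro!: continuous_intros simp: a)
  have cl: "closed A" unfolding A' by (rule continuous_on_closed_Collect_le[OF c2]) auto
  have bdd: "bdd_below A" unfolding A_def by (rule bdd_belowI[of _ 0]) auto
  have neA: "A \<noteq> {}" using ne A_def by simp
  have "Inf A \<in> A" by (rule closed_contains_Inf[OF neA bdd cl])
  moreover have "Inf (ereal ` A) = ereal (Inf A)" using ereal_Inf'[OF bdd neA] by simp
  ultimately show ?thesis unfolding A_def by auto
qed

lemma pathwise: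
  fixes W T :: "real \<Rightarrow> 'a \<Rightarrow> real" and \<beta> x0 :: real and \<omega> :: 'a
  assumes cont: "continuous_on {0..} (\<lambda>t. W t \<omega>)" and W0: "W 0 \<omega> = 0" and x0: "x0 > 0"
    and T0: "T 0 \<omega> = 0" and Tmono: "mono_on {0..} (\<lambda>t. T t \<omega>)"
    and Trc: "\<forall>t\<ge>0. continuous (at_right t) (\<lambda>s. T s \<omega>)"
    and G: "\<forall>rr::rat. 0 < rr \<longrightarrow> drifted_BM W \<beta> x0 \<omega> (Yr (real_of_rat rr) (\<lambda>t. T t \<omega>)) \<noteq> 0"
  shows "(\<lambda>n. tstar_seq W T \<beta> x0 \<omega> n) \<longlonglongrightarrow> first_passage W T \<beta> x0 \<omega>"
proof -
  define f where "f = drifted_BM W \<beta> x0 \<omega>"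
  define \<tau> where "\<tau> = (\<lambda>t. T t \<omega>)"
  define p where "p = tstar_seq W T \<beta> x0 \<omega>"
  define TS where "TS = Tstar W \<beta> x0 \<omega>"
  define ts where "ts = first_passage W T \<beta> x0 \<omega>"
  have fcont: "continuous_on {0..} f" unfolding f_def drifted_BM_def
    by (intro continuous_intros cont)
  have f0: "f 0 > 0" using W0 x0 by (simp add: f_def drifted_BM_def)
  have tmono: "\<tau> s \<le> \<tau> t" if "0 \<le> s" "s \<le> t" for s t
    using mono_onD[OF Tmono] that by (auto simp: \<tau>_def)
  have tpos: "0 \<le> \<tau> t" if "0 \<le> t" for t using tmono[of 0 t] that T0 by (simp add: \<tau>_def)
  have TS_eq: "TS = Inf (ereal ` {S. 0 \<le> S \<and> f S \<le> 0})"
    by (simp add: TS_def Tstar_def f_def drifted_BM_def)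
  have ts_eq: "ts = Inf (ereal ` {t. 0 \<le> t \<and> f (\<tau> t) \<le> 0})"
    by (simp add: ts_def first_passage_def f_def \<tau>_def lsbm_def)
  have p0: "p 0 = Inf (ereal ` {t. 0 \<le> t \<and> TS \<le> ereal (\<tau> t)})"
    by (simp add: p_def TS_def \<tau>_def)
  define stop where "stop n \<longleftrightarrow> p n = \<infinity> \<or> f (\<tau> (real_of_ereal (p n))) \<le> 0" for n
  define sig where "sig q = Inf (ereal ` {S. 0 \<le> S \<and> f (\<tau> q + S) \<le> 0})" for q
  have pS: "p (Suc n) = (if stop n then p n else
      Inf (ereal ` {t. real_of_ereal (p n) \<le> t \<and> sig (real_of_ereal (p n)) \<le> ereal (\<tau> t - \<tau> (real_of_ereal (p n)))}))" for n
    by (simp add: p_def stop_def sig_def tstar_step_def Let_def lsbm_def f_def \<tau>_def)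
  have inv: "0 \<le> p n \<and> (\<forall>t. 0 \<le> t \<longrightarrow> ereal t < p n \<longrightarrow> f (\<tau> t) > 0)" for n
  proof (induction n)
    case 0
    have "0 \<le> p 0" unfolding p0 by (rule Inf_greatest) auto
    moreover have "f (\<tau> t) > 0" if t: "0 \<le> t" "ereal t < p 0" for t
    proof (rule ccontr)
      assume "\<not> f (\<tau> t) > 0"
      then have "\<tau> t \<in> {S. 0 \<le> S \<and> f S \<le> 0}" using tpos t by auto
      then have "TS \<le> ereal (\<tau> t)" unfolding TS_eq by (auto intro: Inf_lower)
      then have "p 0 \<le> ereal t" unfolding p0 using t by (auto intro: Inf_lower)
      then show False using t by simp
    qed
    ultimately show ?case by blast
  next
    case (Suc n)
    show ?case
    proof (cases "stop n")
      case True then show ?thesis using Suc pS by simp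
    next
      case False
      define q where "q = real_of_ereal (p n)"
      have pn: "p n = ereal q" using False Suc unfolding q_def stop_def
        by (cases "p n") auto
      have q0: "0 \<le> q" using Suc pn by simp
      have eqS: "p (Suc n) = Inf (ereal ` {t. q \<le> t \<and> sig q \<le> ereal (\<tau> t - \<tau> q)})"
        using pS False q_def by simp
      have "0 \<le> p (Suc n)" unfolding eqS using q0 by (intro Inf_greatest) auto
      moreover have "f (\<tau> t) > 0" if t: "0 \<le> t" "ereal t < p (Suc n)" for t
      proof (cases "t < q")
        case True then show ?thesis using Suc t pn by auto
      next
        case False
        have "\<not> sig q \<le> ereal (\<tau> t - \<tau> q)"
        proof
          assume "sig q \<le> ereal (\<tau> t - \<tau> q)"
          then have "p (Suc n) \<le> ereal t" unfolding eqS using False by (auto intro: Inf_lower)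
          then show False using t by simp
        qed
        moreover have "\<tau> q \<le> \<tau> t" using False q0 by (intro tmono) auto
        ultimately show ?thesis unfolding sig_def
          by (smt (verit, best) Inf_lower image_eqI mem_Collect_eq)
      qed
      ultimately show ?thesis by blast
    qed
  qed
  have pmono: "p n \<le> p (Suc n)" for n
  proof (cases "stop n")
    case True then show ?thesis using pS by simp
  next
    case False
    define q where "q = real_of_ereal (p n)"
    have pn: "p n = ereal q" using False inv[of n] unfolding q_def stop_def
      by (cases "p n") auto
    have e: "p (Suc n) = Inf (ereal ` {t. q \<le> t \<and> sig q \<le> ereal (\<tau> t - \<tau> q)})"
      using pS[of n] False q_def by simp
    have "ereal q \<le> Inf (ereal ` {t. q \<le> t \<and> sig q \<le> ereal (\<tau> t - \<tau> q)})"
      by (rule Inf_greatest) auto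
    then show ?thesis using e pn by simp
  qed
  have ple: "p n \<le> ts" for n
    unfolding ts_eq
  proof (rule Inf_greatest)
    fix x assume "x \<in> ereal ` {t. 0 \<le> t \<and> f (\<tau> t) \<le> 0}"
    then obtain t where t: "x = ereal t" "0 \<le> t" "f (\<tau> t) \<le> 0" by auto
    show "p n \<le> x" using inv[of n] t by (metis linorder_not_less not_le)
  qed
  have inc: "incseq p" using pmono by (simp add: incseq_SucI)
  show ?thesis
  proof (cases "\<exists>n. stop n")
    case True
    then obtain n where n: "stop n" by blast
    have same: "p m = p n \<and> stop m" if "n \<le> m" for m
      using that
    proof (induction m)
      case 0 then show ?case using n by simp
    next
      case (Suc m)
      show ?case
      proof (cases "n = Suc m")
        case True then show ?thesis using n by simp
      next
        case False
        then have "n \<le> m" using Suc by simp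
        then have "p (Suc m) = p m" "stop m" using Suc pS[of m] by auto
        then show ?thesis using Suc \<open>n \<le> m\<close> unfolding stop_def by simp
      qed
    qed
    have "p n = ts"
    proof (cases "p n = \<infinity>")
      case True then show ?thesis using ple[of n] by simp
    next
      case False
      define q where "q = real_of_ereal (p n)"
      have pn: "p n = ereal q" using False inv[of n] unfolding q_def
        by (cases "p n") auto
      have "f (\<tau> q) \<le> 0" using n False unfolding stop_def q_def by simp
      moreover have "0 \<le> q" using inv[of n] pn by simp
      ultimately have "q \<in> {t. 0 \<le> t \<and> f (\<tau> t) \<le> 0}" by simp
      then have "ts \<le> ereal q" unfolding ts_eq by (rule Inf_lower[OF imageI])
      then show ?thesis using ple[of n] pn by simp
    qed
    then have "\<forall>m\<ge>n. p m = ts" using same by blast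
    then have "eventually (\<lambda>m. p m = ts) sequentially"
      unfolding eventually_sequentially by blast
    then have "p \<longlonglongrightarrow> ts" by (rule tendsto_eventually)
    then show ?thesis unfolding p_def ts_def .
  next
    case False
    then have ns: "\<not> stop n" for n by blast
    define q where "q n = real_of_ereal (p n)" for n
    have pn: "p n = ereal (q n)" for n using ns[of n] inv[of n] unfolding q_def stop_def
      by (cases "p n") auto
    have q0: "0 \<le> q n" for n using inv[of n] pn[of n] by simp
    have fq: "f (\<tau> (q n)) > 0" for n using ns[of n] unfolding stop_def q_def by simp
    define L where "L = Sup (range p)"
    have lim: "p \<longlonglongrightarrow> L" unfolding L_def by (rule LIMSEQ_SUP[OF inc])
    have Lts: "L \<le> ts" unfolding L_def using ple by (auto intro: SUP_least)
    have "ts \<le> L"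
    proof (cases "L = \<infinity>")
      case True then show ?thesis by simp
    next
      case False
      have "p 0 \<le> L" unfolding L_def by (auto intro: SUP_upper)
      then obtain l where Ll: "L = ereal l" using False inv[of 0] by (cases L) auto
      have ql: "q n \<le> l" for n
      proof -
        have "p n \<le> L" unfolding L_def by (auto intro: SUP_upper)
        then show ?thesis using Ll pn by simp
      qed
      have l0: "0 \<le> l" using ql[of 0] q0[of 0] by simp
      have lessq: "\<exists>n. t < q n" if "t < l" for t
      proof -
        have "ereal t < Sup (range p)" using that Ll L_def by simp
        then obtain n where "ereal t < p n" by (auto simp: less_SUP_iff)
        then show ?thesis using pn by auto
      qed
      have ex: "\<exists>S. \<tau> (q n) \<le> S \<and> S \<le> \<tau> (q (Suc n)) \<and> f S \<le> 0" for n
      proof -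
        define B where "B = {t. q n \<le> t \<and> sig (q n) \<le> ereal (\<tau> t - \<tau> (q n))}"
        have eqS: "p (Suc n) = Inf (ereal ` B)" using pS[of n] ns[of n] q_def B_def by simp
        have neB: "B \<noteq> {}"
        proof
          assume "B = {}" then have "p (Suc n) = \<infinity>" using eqS by (simp add: top_ereal_def)
          then show False using pn[of "Suc n"] by simp
        qed
        have gm: "mono_on {q n..} (\<lambda>t. \<tau> t - \<tau> (q n))"
        proof (rule mono_onI)
          fix r s assume "r \<in> {q n..}" "s \<in> {q n..}" "r \<le> s"
          then show "\<tau> r - \<tau> (q n) \<le> \<tau> s - \<tau> (q n)" using tmono[of r s] q0[of n] by simp
        qed
        have grc: "\<forall>t\<ge>q n. continuous (at_right t) (\<lambda>t. \<tau> t - \<tau> (q n))"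
          using Trc q0 unfolding \<tau>_def by (auto intro!: continuous_intros) (meson order_trans)
        obtain u where u: "Inf (ereal ` B) = ereal u" "q n \<le> u" "sig (q n) \<le> ereal (\<tau> u - \<tau> (q n))"
          using time_inf[OF gm grc neB[unfolded B_def]] unfolding B_def by blast
        have uq: "u = q (Suc n)" using u(1) eqS pn[of "Suc n"] by simp
        have neA: "{S. 0 \<le> S \<and> f (\<tau> (q n) + S) \<le> 0} \<noteq> {}"
        proof
          assume E: "{S. 0 \<le> S \<and> f (\<tau> (q n) + S) \<le> 0} = {}"
          have "sig (q n) = \<infinity>" unfolding sig_def E by (simp add: top_ereal_def)
          then show False using u(3) by simp
        qed
        obtain s where s: "sig (q n) = ereal s" "0 \<le> s" "f (\<tau> (q n) + s) \<le> 0"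
          using space_inf[OF fcont tpos[OF q0[of n]] neA] unfolding sig_def by blast
        show ?thesis using s u uq by (intro exI[of _ "\<tau> (q n) + s"]) auto
      qed
      have "\<exists>S. \<forall>n. \<tau> (q n) \<le> S n \<and> S n \<le> \<tau> (q (Suc n)) \<and> f (S n) \<le> 0"
        by (rule choice) (intro allI ex)
      then obtain S where S0': "\<forall>n. \<tau> (q n) \<le> S n \<and> S n \<le> \<tau> (q (Suc n)) \<and> f (S n) \<le> 0"
        by blast
      have S: "\<And>n. \<tau> (q n) \<le> S n" "\<And>n. S n \<le> \<tau> (q (Suc n))" "\<And>n. f (S n) \<le> 0"
        using S0' by auto
      have qinc: "incseq q" using inc pn by (simp add: incseq_def)
      have tqinc: "incseq (\<lambda>n. \<tau> (q n))" using qinc q0 by (auto simp: incseq_def intro: tmono)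
      have tqbdd: "bdd_above (range (\<lambda>n. \<tau> (q n)))"
        using ql q0 by (intro bdd_aboveI[of _ "\<tau> l"]) (auto intro: tmono)
      define Z where "Z = Sup (range (\<lambda>n. \<tau> (q n)))"
      have limZ: "(\<lambda>n. \<tau> (q n)) \<longlonglongrightarrow> Z" unfolding Z_def by (rule LIMSEQ_incseq_SUP[OF tqbdd tqinc])
      have Zl: "Z \<le> \<tau> l" unfolding Z_def using ql q0 by (auto intro!: cSUP_least tmono)
      have Zge: "\<tau> (q n) \<le> Z" for n unfolding Z_def using tqbdd by (auto intro: cSUP_upper)
      have Z0: "0 \<le> Z" using Zge[of 0] tpos[OF q0[of 0]] by simp
      have limS: "S \<longlonglongrightarrow> Z"
        using limZ LIMSEQ_Suc[OF limZ] S(1,2) by (intro tendsto_sandwich[of "\<lambda>n. \<tau> (q n)" S _ "\<lambda>n. \<tau> (q (Suc n))"]) auto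
      have S0: "0 \<le> S n" for n using S(1)[of n] tpos[OF q0[of n]] by simp
      have "(\<lambda>n. f (S n)) \<longlonglongrightarrow> f Z"
        using continuous_on_tendsto_compose[OF fcont limS] Z0 S0 by auto
      then have fZ1: "f Z \<le> 0" using S(3) by (intro LIMSEQ_le_const2) auto
      have "(\<lambda>n. f (\<tau> (q n))) \<longlonglongrightarrow> f Z"
        using continuous_on_tendsto_compose[OF fcont limZ] Z0 tpos q0 by auto
      then have fZ2: "0 \<le> f Z" using fq by (intro LIMSEQ_le_const) (auto intro: less_imp_le)
      have "\<tau> l \<le> Z"
      proof (rule ccontr)
        assume "\<not> \<tau> l \<le> Z"
        then have "Z < \<tau> l" by simp
        then obtain r where r: "r \<in> \<rat>" "Z < r" "r < \<tau> l" using Rats_dense_in_real by blast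
        then obtain rr where rr: "r = real_of_rat rr" by (auto elim: Rats_cases)
        have "0 < real_of_rat rr" using r rr Z0 by linarith
        then have rpos: "0 < rr" by simp
        define Sset where "Sset = {\<tau> (real_of_rat q) | q. 0 \<le> q \<and> \<tau> (real_of_rat q) \<le> r}"
        have bddS: "bdd_above (insert 0 Sset)" unfolding Sset_def
          using r Z0 by (intro bdd_aboveI[of _ r]) auto
        have Yeq: "Yr r \<tau> = Sup (insert 0 Sset)" unfolding Yr_def Sset_def by simp
        have small: "\<tau> t \<le> Z" if "0 \<le> t" "\<tau> t \<le> r" for t
        proof (cases "t < l")
          case True
          then obtain n where "t < q n" using lessq by blast
          then show ?thesis using that tmono[of t "q n"] Zge[of n] by simp
        next
          case False
          then have "\<tau> l \<le> \<tau> t" using l0 by (intro tmono) auto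
          then show ?thesis using that r by simp
        qed
        have "Yr r \<tau> \<le> Z" unfolding Yeq
          by (rule cSup_least) (auto simp: Sset_def Z0 intro!: small)
        moreover have "Z \<le> Yr r \<tau>" unfolding Z_def
        proof (rule cSUP_least)
          fix n
          have "q n < l"
          proof (rule ccontr)
            assume "\<not> q n < l" then have "q n = l" using ql[of n] by simp
            then show False using Zge[of n] r by simp
          qed
          then obtain t where t: "t \<in> \<rat>" "q n < t" "t < l" using Rats_dense_in_real by blast
          then obtain tt where tt: "t = real_of_rat tt" by (auto elim: Rats_cases)
          have t0: "0 \<le> t" using t q0[of n] by simp
          obtain m where "t < q m" using lessq t by blast
          then have "\<tau> t \<le> Z" using tmono[of t "q m"] Zge[of m] t0 by simp
          then have "\<tau> t \<in> Sset" unfolding Sset_def using r t0 tt by auto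
          then have "\<tau> t \<le> Sup (insert 0 Sset)" using bddS by (auto intro: cSup_upper)
          moreover have "\<tau> (q n) \<le> \<tau> t" using t q0[of n] by (intro tmono) auto
          ultimately show "\<tau> (q n) \<le> Yr r \<tau>" unfolding Yeq by simp
        qed simp
        ultimately have "Yr r \<tau> = Z" by simp
        then have "f (Yr (real_of_rat rr) \<tau>) = 0" using fZ1 fZ2 rr by simp
        then show False using G rpos unfolding f_def \<tau>_def by blast
      qed
      then have "f (\<tau> l) \<le> 0" using Zl fZ1 by simp
      then have "l \<in> {t. 0 \<le> t \<and> f (\<tau> t) \<le> 0}" using l0 by simp
      then have "ts \<le> ereal l" unfolding ts_eq by (rule Inf_lower[OF imageI])
      then show ?thesis using Ll by simp
    qed
    then have "L = ts" using Lts by simp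
    then show ?thesis using lim unfolding p_def ts_def by simp
  qed
qed

definition gpred :: "real \<Rightarrow> real \<Rightarrow> (real \<Rightarrow> real) \<Rightarrow> real \<Rightarrow> bool" where
  "gpred x0 \<beta> w y = (\<forall>n::nat. \<exists>q::rat. 0 \<le> q \<and> \<bar>real_of_rat q - y\<bar> < inverse (real (Suc n)) \<and>
      \<bar>x0 + w (real_of_rat q) + \<beta> * real_of_rat q\<bar> < inverse (real (Suc n)))"

lemma g_iff:
  fixes F :: "real \<Rightarrow> real"
  assumes cont: "continuous_on {0..} F" and y: "0 \<le> y"
  shows "(\<forall>n::nat. \<exists>q::rat. 0 \<le> q \<and> \<bar>real_of_rat q - y\<bar> < inverse (real (Suc n)) \<and>
      \<bar>F (real_of_rat q)\<bar> < inverse (real (Suc n))) \<longleftrightarrow> F y = 0"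
proof
  assume H: "\<forall>n::nat. \<exists>q::rat. 0 \<le> q \<and> \<bar>real_of_rat q - y\<bar> < inverse (real (Suc n)) \<and>
      \<bar>F (real_of_rat q)\<bar> < inverse (real (Suc n))"
  then obtain qs where qs: "\<forall>n. 0 \<le> qs n \<and> \<bar>real_of_rat (qs n) - y\<bar> < inverse (real (Suc n)) \<and>
      \<bar>F (real_of_rat (qs n))\<bar> < inverse (real (Suc n))"
    by metis
  define a where "a n = real_of_rat (qs n)" for n
  have a0: "0 \<le> a n" for n using qs unfolding a_def by simp
  have la: "a \<longlonglongrightarrow> y"
  proof (rule tendsto_sandwich[of "\<lambda>n. y - inverse (real (Suc n))" _ _ "\<lambda>n. y + inverse (real (Suc n))"])
    show "\<forall>\<^sub>F n in sequentially. y - inverse (real (Suc n)) \<le> a n"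
      using qs unfolding a_def by (intro always_eventually allI) (smt (verit))
    show "\<forall>\<^sub>F n in sequentially. a n \<le> y + inverse (real (Suc n))"
      using qs unfolding a_def by (intro always_eventually allI) (smt (verit))
    show "(\<lambda>n. y - inverse (real (Suc n))) \<longlonglongrightarrow> y"
      using tendsto_diff[OF tendsto_const LIMSEQ_inverse_real_of_nat] by simp
    show "(\<lambda>n. y + inverse (real (Suc n))) \<longlonglongrightarrow> y"
      using tendsto_add[OF tendsto_const LIMSEQ_inverse_real_of_nat] by simp
  qed
  have l1: "(\<lambda>n. F (a n)) \<longlonglongrightarrow> F y"
    using continuous_on_tendsto_compose[OF cont la] y a0 by auto
  have l2: "(\<lambda>n. F (a n)) \<longlonglongrightarrow> 0"
  proof (rule tendsto_sandwich[of "\<lambda>n. - inverse (real (Suc n))" _ _ "\<lambda>n. inverse (real (Suc n))"])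
    show "\<forall>\<^sub>F n in sequentially. - inverse (real (Suc n)) \<le> F (a n)"
      using qs unfolding a_def by (intro always_eventually allI) (smt (verit))
    show "\<forall>\<^sub>F n in sequentially. F (a n) \<le> inverse (real (Suc n))"
      using qs unfolding a_def by (intro always_eventually allI) (smt (verit))
    show "(\<lambda>n. - inverse (real (Suc n))) \<longlonglongrightarrow> 0"
      using tendsto_minus[OF LIMSEQ_inverse_real_of_nat] by simp
    show "(\<lambda>n. inverse (real (Suc n))) \<longlonglongrightarrow> 0" by (rule LIMSEQ_inverse_real_of_nat)
  qed
  show "F y = 0" using LIMSEQ_unique[OF l1 l2] .
next
  assume Fy: "F y = 0"
  show "\<forall>n::nat. \<exists>q::rat. 0 \<le> q \<and> \<bar>real_of_rat q - y\<bar> < inverse (real (Suc n)) \<and>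
      \<bar>F (real_of_rat q)\<bar> < inverse (real (Suc n))"
  proof
    fix n :: nat
    define e where "e = inverse (real (Suc n))"
    have e0: "0 < e" unfolding e_def by simp
    obtain d where d: "d > 0" "\<forall>x'\<in>{0..}. dist x' y < d \<longrightarrow> dist (F x') (F y) < e"
      using cont y e0 unfolding continuous_on_iff by (meson atLeast_iff)
    have "y < y + min d e" using d e0 by simp
    then obtain t where t: "t \<in> \<rat>" "y < t" "t < y + min d e" using Rats_dense_in_real by blast
    then obtain q where q: "t = real_of_rat q" by (auto elim: Rats_cases)
    have t0: "0 \<le> t" using t y by simp
    have "dist (F t) (F y) < e" using d t t0 by (auto simp: dist_real_def)
    then have "\<bar>F t\<bar> < e" using Fy by (simp add: dist_real_def)
    moreover have "\<bar>t - y\<bar> < e" using t by simp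
    moreover have "0 \<le> q" using t0 q by simp
    ultimately show "\<exists>q::rat. 0 \<le> q \<and> \<bar>real_of_rat q - y\<bar> < inverse (real (Suc n)) \<and>
      \<bar>F (real_of_rat q)\<bar> < inverse (real (Suc n))" using q e_def by blast
  qed
qed

abbreviation PI :: "(real \<Rightarrow> real) measure" where
  "PI \<equiv> Pi\<^sub>M {0..} (\<lambda>_. borel)"

lemma comp_meas: "0 \<le> q \<Longrightarrow> (\<lambda>w. w (real_of_rat q)) \<in> borel_measurable PI"
  by (rule measurable_component_singleton) simp

lemma gpred_meas: "Measurable.pred (PI \<Otimes>\<^sub>M PI) (\<lambda>z. gpred x0 \<beta> (fst z) (snd z 0))"
proof -
  have c: "0 \<le> q \<Longrightarrow> (\<lambda>z. fst z (real_of_rat q)) \<in> borel_measurable (PI \<Otimes>\<^sub>M PI)" for q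
    using measurable_compose[OF measurable_fst comp_meas] by simp
  have s: "(\<lambda>z. snd z 0) \<in> borel_measurable (PI \<Otimes>\<^sub>M PI)"
    using measurable_compose[OF measurable_snd measurable_component_singleton[of 0 "{0..}" "\<lambda>_. borel"]] by simp
  show ?thesis unfolding gpred_def
  proof (intro pred_intros_countable pred_intros_conj1' pred_intros_logic(3))
    fix n :: nat and q :: rat assume q: "0 \<le> q"
    have m1: "(\<lambda>z. \<bar>real_of_rat q - snd z 0\<bar>) \<in> borel_measurable (PI \<Otimes>\<^sub>M PI)"
      by (intro borel_measurable_abs borel_measurable_diff borel_measurable_const s[unfolded o_def])
    have m2: "(\<lambda>z. \<bar>x0 + fst z (real_of_rat q) + \<beta> * real_of_rat q\<bar>) \<in> borel_measurable (PI \<Otimes>\<^sub>M PI)"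
      by (intro borel_measurable_abs borel_measurable_add borel_measurable_const c[OF q])
    show "Measurable.pred (PI \<Otimes>\<^sub>M PI) (\<lambda>z. \<bar>real_of_rat q - snd z 0\<bar> < inverse (real (Suc n)))"
      unfolding pred_def by (rule borel_measurable_less[OF m1 borel_measurable_const])
    show "Measurable.pred (PI \<Otimes>\<^sub>M PI) (\<lambda>z. \<bar>x0 + fst z (real_of_rat q) + \<beta> * real_of_rat q\<bar> < inverse (real (Suc n)))"
      unfolding pred_def by (rule borel_measurable_less[OF m2 borel_measurable_const])
  qed
qed

lemma Yr_meas:
  assumes r: "0 < r"
  shows "Yr r \<in> borel_measurable PI"
proof -
  have Yle: "Yr r \<tau> \<le> a \<longleftrightarrow> 0 \<le> a \<and> (\<forall>q::rat. 0 \<le> q \<longrightarrow> (\<tau> (real_of_rat q) \<le> r \<longrightarrow> \<tau> (real_of_rat q) \<le> a))" for \<tau> a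
  proof -
    have bdd: "bdd_above (insert 0 {\<tau> (real_of_rat q) | q. 0 \<le> q \<and> \<tau> (real_of_rat q) \<le> r})"
      using r by (intro bdd_aboveI[of _ r]) auto
    show ?thesis unfolding Yr_def by (subst cSup_le_iff[OF _ bdd]) auto
  qed
  show ?thesis
  proof (subst borel_measurable_iff_le, intro allI)
    fix a
    have c: "0 \<le> q \<Longrightarrow> (\<lambda>w. w (real_of_rat q)) \<in> borel_measurable PI" for q by (rule comp_meas)
    have "Measurable.pred PI (\<lambda>\<tau>. 0 \<le> a \<and> (\<forall>q::rat. 0 \<le> q \<longrightarrow> (\<tau> (real_of_rat q) \<le> r \<longrightarrow> \<tau> (real_of_rat q) \<le> a)))"
    proof (intro pred_intros_countable pred_intros_conj1' pred_intros_imp' pred_intros_logic(4))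
      fix q :: rat assume q: "0 \<le> q"
      show "Measurable.pred PI (\<lambda>\<tau>. \<tau> (real_of_rat q) \<le> r)"
        unfolding pred_def by (rule borel_measurable_le[OF c[OF q] borel_measurable_const])
      show "Measurable.pred PI (\<lambda>\<tau>. \<tau> (real_of_rat q) \<le> a)"
        unfolding pred_def by (rule borel_measurable_le[OF c[OF q] borel_measurable_const])
    qed
    then show "{w \<in> space PI. Yr r w \<le> a} \<in> sets PI" unfolding Yle pred_def by simp
  qed
qed


lemma G_ae:
  fixes M :: "'a measure" and W T :: "real \<Rightarrow> 'a \<Rightarrow> real" and \<beta> x0 r :: real
  assumes BM: "std_brownian_motion M W" and SUB: "subordinator M T"
    and IND: "indep_processes M W T" and x0: "x0 > 0" and r: "0 < r"
  shows "AE \<omega> in M. drifted_BM W \<beta> x0 \<omega> (Yr r (\<lambda>t. T t \<omega>)) \<noteq> 0"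
proof -
  interpret prob_space M using BM by (simp add: std_brownian_motion_def)
  define Wp where "Wp \<omega> = (\<lambda>t\<in>{0..}. W t \<omega>)" for \<omega>
  define Tp where "Tp \<omega> = (\<lambda>t\<in>{0..}. T t \<omega>)" for \<omega>
  define Y where "Y \<omega> = Yr r (Tp \<omega>)" for \<omega>
  have Wmeas: "W t \<in> borel_measurable M" if "0 \<le> t" for t using BM that by (simp add: std_brownian_motion_def)
  have Wsp: "W 0 \<omega> = 0 \<and> continuous_on {0..} (\<lambda>t. W t \<omega>)" if "\<omega> \<in> space M" for \<omega>
    using BM that by (simp add: std_brownian_motion_def)
  have Tmeas: "T t \<in> borel_measurable M" if "0 \<le> t" for t using SUB that by (simp add: subordinator_def)
  have Wm: "Wp \<in> M \<rightarrow>\<^sub>M PI" unfolding Wp_def by (rule measurable_restrict) (simp add: Wmeas)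
  have Tm: "Tp \<in> M \<rightarrow>\<^sub>M PI" unfolding Tp_def by (rule measurable_restrict) (simp add: Tmeas)
  have Yeq: "Y \<omega> = Yr r (\<lambda>t. T t \<omega>)" for \<omega>
  proof -
    have "{Tp \<omega> (real_of_rat q) | q. 0 \<le> q \<and> Tp \<omega> (real_of_rat q) \<le> r} =
          {T (real_of_rat q) \<omega> | q. 0 \<le> q \<and> T (real_of_rat q) \<omega> \<le> r}"
      by (auto simp: Tp_def)
    then show ?thesis unfolding Y_def Yr_def by simp
  qed
  have Y0: "0 \<le> Y \<omega>" for \<omega>
  proof -
    have bdd: "bdd_above (insert 0 {Tp \<omega> (real_of_rat q) | q. 0 \<le> q \<and> Tp \<omega> (real_of_rat q) \<le> r})"
      using r by (intro bdd_aboveI[of _ r]) auto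
    show ?thesis unfolding Y_def Yr_def by (rule cSup_upper[OF _ bdd]) simp
  qed
  have IND': "indep_var PI Wp PI Tp" using IND by (simp add: indep_processes_def Wp_def[abs_def] Tp_def[abs_def])
  define Yv where "Yv \<omega> = (\<lambda>t\<in>{0::real..}. Y \<omega>)" for \<omega>
  have hm: "(\<lambda>\<tau>. \<lambda>t\<in>{0::real..}. Yr r \<tau>) \<in> PI \<rightarrow>\<^sub>M PI"
    by (rule measurable_restrict) (rule Yr_meas[OF r])
  have ind2: "indep_var PI Wp PI Yv"
    using indep_var_compose[OF IND' measurable_id hm] by (simp add: o_def Y_def[abs_def] Yv_def[abs_def])
  then have Yvm: "Yv \<in> M \<rightarrow>\<^sub>M PI"
    and dist_eq: "distr M PI Wp \<Otimes>\<^sub>M distr M PI Yv = distr M (PI \<Otimes>\<^sub>M PI) (\<lambda>\<omega>. (Wp \<omega>, Yv \<omega>))"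
    using indep_var_distribution_eq by auto
  have Yv0: "Yv \<omega> 0 = Y \<omega>" for \<omega> by (simp add: Yv_def)
  define GS where "GS = {z \<in> space (PI \<Otimes>\<^sub>M PI). gpred x0 \<beta> (fst z) (snd z 0)}"
  have GSm: "GS \<in> sets (PI \<Otimes>\<^sub>M PI)" using gpred_meas unfolding GS_def pred_def by simp
  define E where "E = (\<lambda>\<omega>. (Wp \<omega>, Yv \<omega>)) -` GS \<inter> space M"
  have pm: "(\<lambda>\<omega>. (Wp \<omega>, Yv \<omega>)) \<in> M \<rightarrow>\<^sub>M PI \<Otimes>\<^sub>M PI" by (rule measurable_Pair[OF Wm Yvm])
  have Esets: "E \<in> sets M" unfolding E_def by (rule measurable_sets[OF pm GSm])
  have inner: "emeasure (distr M PI Wp) ((\<lambda>x. (x, v)) -` GS) = 0" if y0': "0 \<le> v 0" and vsp: "v \<in> space PI" for v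
  proof -
    define y where "y = v 0"
    have y0: "0 \<le> y" using y0' y_def by simp
    define S where "S = {w \<in> space PI. gpred x0 \<beta> w y}"
    have SG: "(\<lambda>x. (x, v)) -` GS = S" unfolding S_def GS_def y_def using vsp by (auto simp: space_pair_measure)
    have pm2: "(\<lambda>x. (x, v)) \<in> PI \<rightarrow>\<^sub>M PI \<Otimes>\<^sub>M PI"
      by (rule measurable_Pair[OF measurable_ident_sets[OF refl] measurable_const]) (rule vsp)
    have Ssets: "S \<in> sets PI"
    proof -
      have "(\<lambda>x. (x, v)) -` GS \<inter> space PI \<in> sets PI" by (rule measurable_sets[OF pm2 GSm])
      then show ?thesis using SG unfolding S_def by (simp add: Int_absorb2)
    qed
    have e1: "emeasure (distr M PI Wp) S = emeasure M (Wp -` S \<inter> space M)"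
      by (rule emeasure_distr[OF Wm Ssets])
    define X where "X \<omega> = W y \<omega> - W 0 \<omega>" for \<omega>
    have sub: "Wp -` S \<inter> space M \<subseteq> {\<omega> \<in> space M. X \<omega> = - x0 - \<beta> * y}"
    proof
      fix \<omega> assume \<omega>: "\<omega> \<in> Wp -` S \<inter> space M"
      have cw: "continuous_on {0..} (\<lambda>s. x0 + Wp \<omega> s + \<beta> * s)"
      proof -
        have "continuous_on {0..} (\<lambda>s. x0 + W s \<omega> + \<beta> * s)"
          using Wsp[of \<omega>] \<omega> by (intro continuous_intros) auto
        then show ?thesis by (rule continuous_on_cong[THEN iffD1, rotated 2]) (auto simp: Wp_def)
      qed
      have "gpred x0 \<beta> (Wp \<omega>) y" using \<omega> S_def by auto
      then have "x0 + Wp \<omega> y + \<beta> * y = 0"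
        using g_iff[OF cw y0] unfolding gpred_def by simp
      then show "\<omega> \<in> {\<omega> \<in> space M. X \<omega> = - x0 - \<beta> * y}"
        using \<omega> y0 Wsp[of \<omega>] by (auto simp: Wp_def X_def)
    qed
    have "emeasure M {\<omega> \<in> space M. X \<omega> = - x0 - \<beta> * y} = 0"
    proof (cases "y = 0")
      case True
      have "{\<omega> \<in> space M. X \<omega> = - x0 - \<beta> * y} = {}" using True x0 by (auto simp: X_def)
      then show ?thesis by (metis emeasure_empty)
    next
      case False
      then have "0 < y" using y0 by simp
      then have D: "distributed M lborel X (\<lambda>x. ennreal (normal_density 0 (sqrt (y - 0)) x))"
        using BM unfolding std_brownian_motion_def X_def by auto
      then have Xm: "X \<in> measurable M lborel" and dd: "distr M lborel X = density lborel (\<lambda>x. ennreal (normal_density 0 (sqrt (y - 0)) x))"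
        and dm: "(\<lambda>x. ennreal (normal_density 0 (sqrt (y - 0)) x)) \<in> borel_measurable lborel"
        unfolding distributed_def by auto
      define c where "c = - x0 - \<beta> * y"
      have "{\<omega> \<in> space M. X \<omega> = c} = X -` {c} \<inter> space M" by auto
      also have "emeasure M \<dots> = emeasure (distr M lborel X) {c}"
        by (rule emeasure_distr[symmetric, OF Xm]) simp
      also have "\<dots> = 0"
      proof -
        have "{c} \<in> null_sets lborel" by (simp add: null_sets_def)
        then have "AE x in lborel. x \<in> {c} \<longrightarrow> ennreal (normal_density 0 (sqrt (y - 0)) x) = 0"
          by (rule AE_I') auto
        then have "{c} \<in> null_sets (density lborel (\<lambda>x. ennreal (normal_density 0 (sqrt (y - 0)) x)))"
          using null_sets_density_iff[OF dm] by simp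
        then show ?thesis unfolding dd by auto
      qed
      finally show ?thesis unfolding c_def .
    qed
    moreover have Xb: "X \<in> borel_measurable M" unfolding X_def using Wmeas y0
      by (intro borel_measurable_diff) auto
    moreover have Bs: "{\<omega> \<in> space M. X \<omega> = - x0 - \<beta> * y} \<in> sets M"
      by (rule borel_measurable_eq[OF Xb borel_measurable_const])
    ultimately have "emeasure M (Wp -` S \<inter> space M) = 0"
      using emeasure_mono[OF sub Bs] by simp
    then show ?thesis using e1 SG by simp
  qed
  have psf: "pair_sigma_finite (distr M PI Wp) (distr M PI Yv)"
    unfolding pair_sigma_finite_def
    by (intro conjI prob_space_imp_sigma_finite prob_space_distr Wm Yvm)
  have "emeasure M E = emeasure (distr M (PI \<Otimes>\<^sub>M PI) (\<lambda>\<omega>. (Wp \<omega>, Yv \<omega>))) GS"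
    unfolding E_def by (rule emeasure_distr[symmetric, OF pm GSm])
  also have "\<dots> = emeasure (distr M PI Wp \<Otimes>\<^sub>M distr M PI Yv) GS" using dist_eq by simp
  also have "\<dots> = (\<integral>\<^sup>+ v. emeasure (distr M PI Wp) ((\<lambda>x. (x, v)) -` GS) \<partial>distr M PI Yv)"
    by (rule pair_sigma_finite.emeasure_pair_measure_alt2[OF psf]) (simp add: GSm)
  also have "\<dots> = (\<integral>\<^sup>+ v. 0 \<partial>distr M PI Yv)"
  proof (rule nn_integral_cong_AE)
    have c0: "(\<lambda>v. v 0) \<in> borel_measurable PI"
      by (rule measurable_component_singleton) simp
    have "{x \<in> space PI. 0 \<le> x 0} \<in> sets PI"
      using borel_measurable_le[OF borel_measurable_const c0] by simp
    then have "AE v in distr M PI Yv. 0 \<le> v 0"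
      by (subst AE_distr_iff[OF Yvm]) (auto simp: Yv0 Y0)
    then show "AE v in distr M PI Yv. emeasure (distr M PI Wp) ((\<lambda>x. (x, v)) -` GS) = 0"
      by (rule AE_mp) (auto intro!: AE_I2 inner)
  qed
  finally have E0: "emeasure M E = 0" by simp
  show ?thesis
  proof (rule AE_I'[of E])
    show "E \<in> null_sets M" using Esets E0 by (simp add: null_sets_def)
    show "{\<omega> \<in> space M. \<not> drifted_BM W \<beta> x0 \<omega> (Yr r (\<lambda>t. T t \<omega>)) \<noteq> 0} \<subseteq> E"
    proof
      fix \<omega> assume \<omega>: "\<omega> \<in> {\<omega> \<in> space M. \<not> drifted_BM W \<beta> x0 \<omega> (Yr r (\<lambda>t. T t \<omega>)) \<noteq> 0}"
      then have sp: "\<omega> \<in> space M" and z: "x0 + W (Y \<omega>) \<omega> + \<beta> * Y \<omega> = 0"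
        by (auto simp: drifted_BM_def Yeq)
      have cw: "continuous_on {0..} (\<lambda>s. x0 + Wp \<omega> s + \<beta> * s)"
      proof -
        have "continuous_on {0..} (\<lambda>s. x0 + W s \<omega> + \<beta> * s)"
          using Wsp[OF sp] by (intro continuous_intros) auto
        then show ?thesis by (rule continuous_on_cong[THEN iffD1, rotated 2]) (auto simp: Wp_def)
      qed
      have "x0 + Wp \<omega> (Y \<omega>) + \<beta> * Y \<omega> = 0" using z Y0[of \<omega>] by (simp add: Wp_def)
      then have "gpred x0 \<beta> (Wp \<omega>) (Y \<omega>)" using g_iff[OF cw Y0[of \<omega>]] unfolding gpred_def by simp
      moreover have "Wp \<omega> \<in> space PI" using measurable_space[OF Wm sp] .
      moreover have "Yv \<omega> \<in> space PI" using measurable_space[OF Yvm sp] .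
      ultimately show "\<omega> \<in> E" unfolding E_def GS_def using sp by (simp add: space_pair_measure Yv0)
    qed
  qed
qed

theorem theorem4p2:
  fixes M :: "'a measure" and W T :: "real \<Rightarrow> 'a \<Rightarrow> real" and \<beta> x0 :: real
  assumes "std_brownian_motion M W"
    and "subordinator M T"
    and "indep_processes M W T"
    and "x0 > 0"
  shows "AE \<omega> in M. (\<lambda>n. tstar_seq W T \<beta> x0 \<omega> n) \<longlonglongrightarrow> first_passage W T \<beta> x0 \<omega>"
proof -
  have "AE \<omega> in M. \<forall>rr::rat. 0 < rr \<longrightarrow> drifted_BM W \<beta> x0 \<omega> (Yr (real_of_rat rr) (\<lambda>t. T t \<omega>)) \<noteq> 0"
  proof (subst AE_all_countable, intro allI)
    fix rr :: rat
    show "AE \<omega> in M. 0 < rr \<longrightarrow> drifted_BM W \<beta> x0 \<omega> (Yr (real_of_rat rr) (\<lambda>t. T t \<omega>)) \<noteq> 0"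
    proof (cases "0 < rr")
      case True
      then have "0 < real_of_rat rr" by simp
      from G_ae[OF assms this, of \<beta>] show ?thesis by (rule AE_mp) (auto intro: AE_I2)
    next
      case False then show ?thesis by (auto intro: AE_I2)
    qed
  qed
  then show ?thesis
  proof (rule AE_mp)
    show "AE \<omega> in M. (\<forall>rr::rat. 0 < rr \<longrightarrow> drifted_BM W \<beta> x0 \<omega> (Yr (real_of_rat rr) (\<lambda>t. T t \<omega>)) \<noteq> 0) \<longrightarrow>
        (\<lambda>n. tstar_seq W T \<beta> x0 \<omega> n) \<longlonglongrightarrow> first_passage W T \<beta> x0 \<omega>"
    proof (rule AE_I2, rule impI)
      fix \<omega> assume sp: "\<omega> \<in> space M"
        and G: "\<forall>rr::rat. 0 < rr \<longrightarrow> drifted_BM W \<beta> x0 \<omega> (Yr (real_of_rat rr) (\<lambda>t. T t \<omega>)) \<noteq> 0"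
      have w: "W 0 \<omega> = 0" "continuous_on {0..} (\<lambda>t. W t \<omega>)"
        using assms(1) sp by (auto simp: std_brownian_motion_def)
      have t: "T 0 \<omega> = 0" "mono_on {0..} (\<lambda>t. T t \<omega>)" "\<forall>t\<ge>0. continuous (at_right t) (\<lambda>s. T s \<omega>)"
        using assms(2) sp by (auto simp: subordinator_def)
      show "(\<lambda>n. tstar_seq W T \<beta> x0 \<omega> n) \<longlonglongrightarrow> first_passage W T \<beta> x0 \<omega>"
        by (rule pathwise[where W=W and T=T and \<omega>=\<omega>, OF w(2) w(1) assms(4) t G])
    qed
  qed
qed

end
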